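(* Let $W\in\mathbb{R}^{m\times n}$ with columns $W_1,\dots,W_n$ and $F:=WW^\top$. Assume Spectral Localization holds for all features: for every $i\in\{1,\dots,n\}$ there is $\lambda(i)>0$ with $FW_i=\lambda(i)W_i$. Let $\lambda_1,\dots,\lambda_r$ be the distinct positive eigenvalues of $F$, and set $$C_k:=\{i:\lambda(i)=\lambda_k\},\qquad V_k:=\operatorname{span}\{W_i:i\in C_k\}.$$ Then $\{C_k\}_{k=1}^r$ partitions $\{1,\dots,n\}$, the subspaces $V_k$ are pairwise orthogonal, and $$F=\sum_{k=1}^r\lambda_k P_{V_k}\quad\text{on }\operatorname{Im}(W),\qquad F=0\text{ on }\ker(F),$$ where $P_{V_k}$ is the orthogonal projector onto $V_k$. Moreover, for each $k$, $$\sum_{i\in C_k}W_iW_i^\top=\lambda_k I\quad\text{on }V_k,$$ i.e. the vectors $(W_i)_{i\in C_k}$ form a tight frame for $V_k$ with frame constant $\lambda_k$.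
   Context: A family of vectors $(w_i)$ spanning a subspace $V$ is a tight frame for $V$ with constant $\lambda$ if $\sum_i w_iw_i^\top$ acts as $\lambda$ times the identity on $V$. *)

theory Defs
  imports "HOL-Analysis.Analysis"
begin

definition is_eigenvalue :: "real^'m^'m \<Rightarrow> real \<Rightarrow> bool" where
  "is_eigenvalue F \<mu> \<longleftrightarrow> (\<exists>v. v \<noteq> 0 \<and> F *v v = \<mu> *\<^sub>R v)"

definition orth_proj :: "('a::real_inner) set \<Rightarrow> 'a \<Rightarrow> 'a" where
  "orth_proj V x = (THE p. p \<in> V \<and> (\<forall>v\<in>V. inner (x - p) v = 0))"

definition outer :: "real^'m \<Rightarrow> real^'m^'m" where
  "outer v = (\<chi> a b. v $ a * v $ b)"

end

theory Submission
  imports Defs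
begin

lemma F_expand:
  fixes W :: "real^'n^'m"
  shows "(W ** transpose W) *v x = (\<Sum>i\<in>UNIV. inner (column i W) x *\<^sub>R column i W)"
proof -
  have "(W ** transpose W) *v x = W *v (transpose W *v x)"
    by (rule matrix_vector_mul_assoc[symmetric])
  also have "\<dots> = (\<Sum>i\<in>UNIV. (transpose W *v x)$i *\<^sub>R column i W)"
    by (simp add: matrix_mult_sum scalar_mult_eq_scaleR)
  also have "\<dots> = (\<Sum>i\<in>UNIV. inner (column i W) x *\<^sub>R column i W)"
    by (simp add: matrix_vector_mul_component inner_vec_def column_def transpose_def)
  finally show ?thesis .
qed

lemma outer_mult: "outer v *v x = inner v x *\<^sub>R v"
  by (simp add: outer_def vec_eq_iff matrix_vector_mult_def inner_vec_def sum_distrib_left mult_ac)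

lemma sum_mat_mult:
  fixes f :: "'i \<Rightarrow> real^'n^'m"
  assumes "finite S"
  shows "(sum f S) *v x = (\<Sum>i\<in>S. f i *v x)"
  using assms by (induction S rule: finite_induct) (auto simp: matrix_vector_mult_add_rdistrib)

lemma mv_sum:
  fixes A :: "real^'n^'m"
  assumes "finite S"
  shows "A *v (sum f S) = (\<Sum>i\<in>S. A *v f i)"
  using assms by (induction S rule: finite_induct) (auto simp: matrix_vector_right_distrib)

lemma orth_proj_eq:
  fixes V :: "'a::real_inner set"
  assumes "subspace V" "p \<in> V" "\<forall>v\<in>V. inner (x - p) v = 0"
  shows "orth_proj V x = p"
  unfolding orth_proj_def
proof (rule the_equality)
  show "p \<in> V \<and> (\<forall>v\<in>V. inner (x - p) v = 0)" using assms by auto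
next
  fix q assume q: "q \<in> V \<and> (\<forall>v\<in>V. inner (x - q) v = 0)"
  have d: "p - q \<in> V" using assms q by (simp add: subspace_diff)
  have "inner (x - q) (p - q) = 0" "inner (x - p) (p - q) = 0" using q assms d by auto
  then have "inner (p - q) (p - q) = 0" by (simp add: inner_diff_left)
  then show "q = p" by simp
qed

theorem theorem3:
  fixes W :: "real^'n^'m" and lam :: "'n \<Rightarrow> real"
  defines "F \<equiv> W ** transpose W"
  defines "\<Lambda> \<equiv> {\<mu>. \<mu> > 0 \<and> is_eigenvalue F \<mu>}"
  defines "C \<equiv> (\<lambda>\<mu>. {i. lam i = \<mu>})"
  defines "V \<equiv> (\<lambda>\<mu>. span ((\<lambda>i. column i W) ` C \<mu>))"
  assumes nonzero: "\<And>i. column i W \<noteq> 0"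
  assumes pos: "\<And>i. lam i > 0"
  assumes loc: "\<And>i. F *v column i W = lam i *\<^sub>R column i W"
  shows "finite \<Lambda>
    \<and> (\<forall>\<mu>\<in>\<Lambda>. C \<mu> \<noteq> {})
    \<and> (\<forall>\<mu>\<in>\<Lambda>. \<forall>\<nu>\<in>\<Lambda>. \<mu> \<noteq> \<nu> \<longrightarrow> C \<mu> \<inter> C \<nu> = {})
    \<and> (\<Union>\<mu>\<in>\<Lambda>. C \<mu>) = UNIV
    \<and> (\<forall>\<mu>\<in>\<Lambda>. \<forall>\<nu>\<in>\<Lambda>. \<mu> \<noteq> \<nu> \<longrightarrow> (\<forall>x\<in>V \<mu>. \<forall>y\<in>V \<nu>. inner x y = 0))
    \<and> (\<forall>x\<in>range (\<lambda>y. W *v y). F *v x = (\<Sum>\<mu>\<in>\<Lambda>. \<mu> *\<^sub>R orth_proj (V \<mu>) x))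
    \<and> (\<forall>x. F *v x = 0 \<longrightarrow> F *v x = 0)
    \<and> (\<forall>\<mu>\<in>\<Lambda>. \<forall>x\<in>V \<mu>. (\<Sum>i\<in>C \<mu>. outer (column i W)) *v x = \<mu> *\<^sub>R x)"
proof -
  let ?c = "\<lambda>i. column i W"
  have Fx: "F *v x = (\<Sum>i\<in>UNIV. inner (?c i) x *\<^sub>R ?c i)" for x
    unfolding F_def by (rule F_expand)
  have sym: "inner (F *v x) y = inner x (F *v y)" for x y
    unfolding Fx by (simp add: inner_sum_left inner_sum_right inner_commute mult.commute)
  define E where "E = (\<lambda>\<mu>. {x. F *v x = \<mu> *\<^sub>R x})"
  have subE: "subspace (E \<mu>)" for \<mu>
    unfolding subspace_def E_def
    by (auto simp: matrix_vector_right_distrib matrix_vector_mult_scaleR scaleR_add_right)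
  have orthE: "inner x y = 0" if "x \<in> E \<mu>" "y \<in> E \<nu>" "\<mu> \<noteq> \<nu>" for x y \<mu> \<nu>
  proof -
    have "\<mu> * inner x y = \<nu> * inner x y"
      using sym[of x y] that by (simp add: E_def)
    then show ?thesis using that(3) by simp
  qed
  have cE: "?c i \<in> E (lam i)" for i using loc by (simp add: E_def)
  have VE: "V \<mu> \<subseteq> E \<mu>" for \<mu>
    unfolding V_def by (rule span_minimal) (use cE subE in \<open>auto simp: C_def\<close>)
  have corth: "inner (?c i) x = 0" if "lam i \<noteq> \<mu>" "x \<in> E \<mu>" for i x \<mu>
    using orthE[OF cE that(2) that(1)] .
  have Leq: "\<Lambda> = range lam"
  proof
    show "range lam \<subseteq> \<Lambda>"
      using pos loc nonzero by (auto simp: \<Lambda>_def is_eigenvalue_def)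
  next
    show "\<Lambda> \<subseteq> range lam"
    proof
      fix \<mu> assume "\<mu> \<in> \<Lambda>"
      then obtain v where v: "v \<noteq> 0" "F *v v = \<mu> *\<^sub>R v" "\<mu> > 0"
        by (auto simp: \<Lambda>_def is_eigenvalue_def)
      show "\<mu> \<in> range lam"
      proof (rule ccontr)
        assume "\<mu> \<notin> range lam"
        then have "\<And>i. lam i \<noteq> \<mu>" by auto
        then have "\<And>i. inner (?c i) v = 0" using corth v by (auto simp: E_def)
        then have "F *v v = 0" by (simp add: Fx)
        then show False using v by simp
      qed
    qed
  qed
  have finL: "finite \<Lambda>" unfolding Leq by simp
  have p1: "\<forall>\<mu>\<in>\<Lambda>. C \<mu> \<noteq> {}" unfolding Leq C_def by auto
  have p2: "\<forall>\<mu>\<in>\<Lambda>. \<forall>\<nu>\<in>\<Lambda>. \<mu> \<noteq> \<nu> \<longrightarrow> C \<mu> \<inter> C \<nu> = {}" unfolding C_def by auto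
  have p3: "(\<Union>\<mu>\<in>\<Lambda>. C \<mu>) = UNIV" unfolding Leq C_def by auto
  have p4: "\<forall>\<mu>\<in>\<Lambda>. \<forall>\<nu>\<in>\<Lambda>. \<mu> \<noteq> \<nu> \<longrightarrow> (\<forall>x\<in>V \<mu>. \<forall>y\<in>V \<nu>. inner x y = 0)"
    using VE orthE by blast
  have p5: "F *v x = (\<Sum>\<mu>\<in>\<Lambda>. \<mu> *\<^sub>R orth_proj (V \<mu>) x)" if xr: "x \<in> range (\<lambda>y. W *v y)" for x
  proof -
    obtain y where y: "x = W *v y" using xr by auto
    have xs: "x = (\<Sum>i\<in>UNIV. y$i *\<^sub>R ?c i)"
      unfolding y by (simp add: matrix_mult_sum scalar_mult_eq_scaleR)
    define p where "p = (\<lambda>\<mu>. \<Sum>i\<in>UNIV. (if lam i = \<mu> then y$i else 0) *\<^sub>R ?c i)"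
    have proj: "orth_proj (V \<mu>) x = p \<mu>" for \<mu>
    proof (rule orth_proj_eq)
      show "subspace (V \<mu>)" unfolding V_def by simp
      show "p \<mu> \<in> V \<mu>"
        unfolding p_def V_def
        by (intro span_sum) (auto simp: C_def intro: span_mul span_base span_zero)
      show "\<forall>v\<in>V \<mu>. inner (x - p \<mu>) v = 0"
      proof
        fix v assume "v \<in> V \<mu>"
        then have vE: "v \<in> E \<mu>" using VE by blast
        have "x - p \<mu> = (\<Sum>i\<in>UNIV. (if lam i = \<mu> then 0 else y$i) *\<^sub>R ?c i)"
          unfolding xs p_def by (simp add: sum_subtractf[symmetric] scaleR_diff_left[symmetric]) (rule sum.cong, auto)
        then show "inner (x - p \<mu>) v = 0"
          using corth[OF _ vE] by (simp add: inner_sum_left) (rule sum.neutral, auto)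
      qed
    qed
    have "F *v x = (\<Sum>i\<in>UNIV. (lam i * y$i) *\<^sub>R ?c i)"
      unfolding xs by (simp add: mv_sum matrix_vector_mult_scaleR loc mult.commute)
    also have "\<dots> = (\<Sum>i\<in>UNIV. \<Sum>\<mu>\<in>\<Lambda>. (if lam i = \<mu> then \<mu> * y$i else 0) *\<^sub>R ?c i)"
      by (rule sum.cong) (auto simp: if_distrib[of "\<lambda>t. t *\<^sub>R _"] sum.delta finL Leq cong: if_cong)
    also have "\<dots> = (\<Sum>\<mu>\<in>\<Lambda>. \<mu> *\<^sub>R p \<mu>)"
      by (subst sum.swap) (auto simp: p_def scaleR_sum_right intro!: sum.cong)
    finally show ?thesis by (simp add: proj)
  qed
  have p6: "(\<Sum>i\<in>C \<mu>. outer (?c i)) *v x = \<mu> *\<^sub>R x" if "\<mu> \<in> \<Lambda>" "x \<in> V \<mu>" for \<mu> x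
  proof -
    have xE: "x \<in> E \<mu>" using that VE by blast
    have "(\<Sum>i\<in>C \<mu>. outer (?c i)) *v x = (\<Sum>i\<in>C \<mu>. inner (?c i) x *\<^sub>R ?c i)"
      by (simp add: sum_mat_mult outer_mult)
    also have "\<dots> = (\<Sum>i\<in>UNIV. inner (?c i) x *\<^sub>R ?c i)"
      by (rule sum.mono_neutral_left) (auto simp: C_def corth[OF _ xE])
    also have "\<dots> = \<mu> *\<^sub>R x" using xE by (simp add: Fx[symmetric] E_def)
    finally show ?thesis .
  qed
  show ?thesis using finL p1 p2 p3 p4 p5 p6 by blast
qed
end
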